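(* Suppose there is a constant $a>0$ such that $\mathbb P(\|\hat F^{(i)}_t-F^{(i)}\|\ge x)\le2\exp(-atx^2)$ for all $i\in\mathbb K$, $x>0$, $t\ge1$. Then for every admissible policy $\pi$, every $T\ge1$ and every $x\ge0$, $$\mathbb P\bigl(\|\hat F^\pi_T-\tilde F^\pi_T\|>x\bigr)\le2KT\exp\Bigl(-a\frac{Tx^2}{K^2}\Bigr).$$
   Context: Bandit setting: $K\ge1$, $\mathbb K=\{1,\dots,K\}$; arm $i$ produces i.i.d. rewards $X^{(i)}_1,X^{(i)}_2,\dots$ with distribution function $F^{(i)}$, all rewards mutually independent. An admissible policy $\pi=(\pi_1,\pi_2,\dots)$ chooses $\pi_t\in\mathbb K$ as a measurable function of an independent randomization variable and of past actions/rewards; $\tau_i(t)=\sum_{s\le t}\mathbf 1\{\pi_s=i\}$, the reward at time $t$ is $X^\pi_t=X^{(i)}_{\tau_i(t)}$ on $\{\pi_t=i\}$. $\hat F^\pi_T(y)=\frac1T\sum_{t\le T}\mathbf 1\{X^\pi_t\le y\}$, $\hat F^{(i)}_t(y)=\frac1t\sum_{s\le t}\mathbf 1\{X^{(i)}_s\le y\}$, and $\tilde F^\pi_T=\frac1T\sum_{i=1}^K\tau_i(T)F^{(i)}$. $\|\cdot\|$ is a norm on a vector space of bounded functions $\mathbb R\to\mathbb R$ containing all these functions. *)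

theory Defs
  imports "HOL-Probability.Probability"
begin

definition fun_norm_on :: "(real \<Rightarrow> real) set \<Rightarrow> ((real \<Rightarrow> real) \<Rightarrow> real) \<Rightarrow> bool" where
  "fun_norm_on V N \<longleftrightarrow>
     (\<lambda>_. 0) \<in> V \<and> (\<forall>f\<in>V. \<forall>g\<in>V. (\<lambda>y. f y + g y) \<in> V) \<and>
     (\<forall>c. \<forall>f\<in>V. (\<lambda>y. c * f y) \<in> V) \<and>
     (\<forall>f\<in>V. \<exists>B. \<forall>y. \<bar>f y\<bar> \<le> B) \<and>
     (\<forall>f\<in>V. N f \<ge> 0) \<and> (\<forall>f\<in>V. N f = 0 \<longleftrightarrow> f = (\<lambda>_. 0)) \<and>
     (\<forall>c. \<forall>f\<in>V. N (\<lambda>y. c * f y) = \<bar>c\<bar> * N f) \<and>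
     (\<forall>f\<in>V. \<forall>g\<in>V. N (\<lambda>y. f y + g y) \<le> N f + N g)"

text \<open>A policy rule: pol t u as xs is the arm chosen at time t given the randomization value u,
  the past actions as s and past rewards xs s (s = 1 .. t-1).\<close>
definition admissible_policy ::
  "nat \<Rightarrow> 'u measure \<Rightarrow> (nat \<Rightarrow> 'u \<Rightarrow> (nat \<Rightarrow> nat) \<Rightarrow> (nat \<Rightarrow> real) \<Rightarrow> nat) \<Rightarrow> bool" where
  "admissible_policy K Mu pol \<longleftrightarrow>
     (\<forall>t\<ge>1. \<forall>u as xs. pol t u as xs \<in> {1..K}) \<and>
     (\<forall>t\<ge>1. (\<lambda>(u, as, xs). pol t u as xs) \<in>
        measurable (Mu \<Otimes>\<^sub>M (PiM {1..<t} (\<lambda>_. count_space UNIV) \<Otimes>\<^sub>M PiM {1..<t} (\<lambda>_. borel)))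
                   (count_space UNIV))"

text \<open>History (actions, rewards) up to time t of policy pol, arm rewards X i s (s >= 1),
  randomization U.  At time t the arm i chosen yields its tau_i(t)-th reward.\<close>
primrec pol_hist ::
  "(nat \<Rightarrow> 'u \<Rightarrow> (nat \<Rightarrow> nat) \<Rightarrow> (nat \<Rightarrow> real) \<Rightarrow> nat) \<Rightarrow> (nat \<Rightarrow> nat \<Rightarrow> 'a \<Rightarrow> real) \<Rightarrow> ('a \<Rightarrow> 'u)
    \<Rightarrow> nat \<Rightarrow> 'a \<Rightarrow> (nat \<Rightarrow> nat) \<times> (nat \<Rightarrow> real)" where
  "pol_hist pol X U 0 \<omega> = ((\<lambda>_. 0), (\<lambda>_. 0))"
| "pol_hist pol X U (Suc t) \<omega> =
     (let as = fst (pol_hist pol X U t \<omega>); xs = snd (pol_hist pol X U t \<omega>);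
          i = pol (Suc t) (U \<omega>) (restrict as {1..<Suc t}) (restrict xs {1..<Suc t});
          n = card {s \<in> {1..t}. as s = i} + 1
      in (as(Suc t := i), xs(Suc t := X i n \<omega>)))"

definition pol_action where "pol_action pol X U t \<omega> = fst (pol_hist pol X U t \<omega>) t"
definition pol_reward where "pol_reward pol X U t \<omega> = snd (pol_hist pol X U t \<omega>) t"

definition pol_count where
  "pol_count pol X U i t \<omega> = card {s \<in> {1..t}. pol_action pol X U s \<omega> = i}"

definition emp_cdf :: "(nat \<Rightarrow> nat \<Rightarrow> 'a \<Rightarrow> real) \<Rightarrow> nat \<Rightarrow> nat \<Rightarrow> 'a \<Rightarrow> real \<Rightarrow> real" where
  "emp_cdf X i t \<omega> y = (1 / real t) * (\<Sum>s = 1..t. if X i s \<omega> \<le> y then 1 else 0)"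

definition pol_emp_cdf where
  "pol_emp_cdf pol X U T \<omega> y = (1 / real T) * (\<Sum>t = 1..T. if pol_reward pol X U t \<omega> \<le> y then 1 else 0)"

definition pol_mix_cdf where
  "pol_mix_cdf K F pol X U T \<omega> y = (1 / real T) * (\<Sum>i = 1..K. real (pol_count pol X U i T \<omega>) * F i y)"

end

theory Submission
  imports Defs
begin

lemma hist_stable:
  "s \<le> t \<Longrightarrow> fst (pol_hist pol X U t \<omega>) s = fst (pol_hist pol X U s \<omega>) s \<and>
                snd (pol_hist pol X U t \<omega>) s = snd (pol_hist pol X U s \<omega>) s"
proof (induction t)
  case 0 then show ?case by simp
next
  case (Suc t)
  show ?case
  proof (cases "s = Suc t")
    case True then show ?thesis by simp
  next
    case False
    then have "s \<le> t" using Suc.prems by simp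
    with Suc.IH False show ?thesis by (simp add: Let_def)
  qed
qed

lemma action_Suc:
  "pol_action pol X U (Suc t) \<omega> =
     pol (Suc t) (U \<omega>) (restrict (fst (pol_hist pol X U t \<omega>)) {1..<Suc t})
        (restrict (snd (pol_hist pol X U t \<omega>)) {1..<Suc t})"
  by (simp add: pol_action_def Let_def)

lemma reward_Suc:
  "pol_reward pol X U (Suc t) \<omega> =
     X (pol_action pol X U (Suc t) \<omega>)
       (card {s \<in> {1..Suc t}. pol_action pol X U s \<omega> = pol_action pol X U (Suc t) \<omega>}) \<omega>"
proof -
  define i where "i = pol_action pol X U (Suc t) \<omega>"
  have A: "\<And>s. s \<in> {1..t} \<Longrightarrow> fst (pol_hist pol X U t \<omega>) s = pol_action pol X U s \<omega>"
    unfolding pol_action_def by (metis atLeastAtMost_iff hist_stable)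
  have "{s \<in> {1..t}. fst (pol_hist pol X U t \<omega>) s = i} = {s \<in> {1..t}. pol_action pol X U s \<omega> = i}"
    using A by auto
  moreover have "{s \<in> {1..Suc t}. pol_action pol X U s \<omega> = i} = insert (Suc t) {s \<in> {1..t}. pol_action pol X U s \<omega> = i}"
    using i_def by auto
  moreover have "pol_reward pol X U (Suc t) \<omega> = X i (card {s \<in> {1..t}. fst (pol_hist pol X U t \<omega>) s = i} + 1) \<omega>"
    by (simp add: pol_reward_def i_def pol_action_def Let_def)
  ultimately show ?thesis by (simp add: i_def)
qed

lemma regroup:
  fixes g :: "nat \<Rightarrow> nat \<Rightarrow> real" and A :: "nat \<Rightarrow> nat" and K T :: nat
  assumes "\<And>t. t \<ge> 1 \<Longrightarrow> A t \<in> {1..K}"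
  shows "(\<Sum>t=1..T. g (A t) (card {s \<in> {1..t}. A s = A t})) =
         (\<Sum>i=1..K. \<Sum>s=1..card {s \<in> {1..T}. A s = i}. g i s)"
proof (induction T)
  case 0 then show ?case by simp
next
  case (Suc T)
  define a where "a = A (Suc T)"
  have a: "a \<in> {1..K}" using assms a_def by simp
  have c: "\<And>i. card {s \<in> {1..Suc T}. A s = i} = card {s \<in> {1..T}. A s = i} + (if a = i then 1 else 0)"
  proof -
    fix i
    show "card {s \<in> {1..Suc T}. A s = i} = card {s \<in> {1..T}. A s = i} + (if a = i then 1 else 0)"
    proof (cases "a = i")
      case True
      then have "{s \<in> {1..Suc T}. A s = i} = insert (Suc T) {s \<in> {1..T}. A s = i}" using a_def by auto
      then show ?thesis using True by simp
    next
      case False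
      then have "{s \<in> {1..Suc T}. A s = i} = {s \<in> {1..T}. A s = i}" using a_def by (auto simp: le_Suc_eq)
      then show ?thesis using False by simp
    qed
  qed
  have "(\<Sum>i=1..K. \<Sum>s=1..card {s \<in> {1..Suc T}. A s = i}. g i s) =
        (\<Sum>i=1..K. (\<Sum>s=1..card {s \<in> {1..T}. A s = i}. g i s) + (if a = i then g i (card {s \<in> {1..T}. A s = i} + 1) else 0))"
  proof (rule sum.cong[OF refl])
    fix i
    show "(\<Sum>s=1..card {s \<in> {1..Suc T}. A s = i}. g i s) =
        (\<Sum>s=1..card {s \<in> {1..T}. A s = i}. g i s) + (if a = i then g i (card {s \<in> {1..T}. A s = i} + 1) else 0)"
      by (simp only: c) (simp add: sum.cl_ivl_Suc)
  qed
  also have "\<dots> = (\<Sum>i=1..K. \<Sum>s=1..card {s \<in> {1..T}. A s = i}. g i s) + g a (card {s \<in> {1..T}. A s = a} + 1)"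
    using a by (simp add: sum.distrib)
  finally show ?case using Suc.IH c[of a] by (simp add: a_def)
qed

lemma norm_sum:
  assumes "fun_norm_on V N" "finite I" "\<forall>i\<in>I. f i \<in> V"
  shows "(\<lambda>y. \<Sum>i\<in>I. f i y) \<in> V \<and> N (\<lambda>y. \<Sum>i\<in>I. f i y) \<le> (\<Sum>i\<in>I. N (f i))"
  using assms(2,3)
proof (induction I rule: finite_induct)
  case empty
  have z: "(\<lambda>_. 0) \<in> V" "\<forall>f\<in>V. (N f = 0) = (f = (\<lambda>_. 0))"
    using assms(1) unfolding fun_norm_on_def by simp_all
  then have "N (\<lambda>_. 0) = 0" by blast
  with z(1) show ?case by simp
next
  case (insert j I)
  have fj: "f j \<in> V" and IH: "(\<lambda>y. \<Sum>i\<in>I. f i y) \<in> V" "N (\<lambda>y. \<Sum>i\<in>I. f i y) \<le> (\<Sum>i\<in>I. N (f i))"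
    using insert.prems insert.IH by simp_all
  have add: "\<And>g h. g \<in> V \<Longrightarrow> h \<in> V \<Longrightarrow> (\<lambda>y. g y + h y) \<in> V \<and> N (\<lambda>y. g y + h y) \<le> N g + N h"
  proof -
    fix g h assume "g \<in> V" "h \<in> V"
    moreover have "\<forall>f\<in>V. \<forall>g\<in>V. (\<lambda>y. f y + g y) \<in> V" "\<forall>f\<in>V. \<forall>g\<in>V. N (\<lambda>y. f y + g y) \<le> N f + N g"
      using assms(1) unfolding fun_norm_on_def by simp_all
    ultimately show "(\<lambda>y. g y + h y) \<in> V \<and> N (\<lambda>y. g y + h y) \<le> N g + N h" by simp
  qed
  have e: "(\<lambda>y. \<Sum>i\<in>insert j I. f i y) = (\<lambda>y. f j y + (\<Sum>i\<in>I. f i y))"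
    using insert(1,2) by simp
  show ?case unfolding e using add[OF fj IH(1)] IH(2) insert(1,2) by simp
qed


theorem lemma18:
  fixes M :: "'a measure" and K :: nat and X :: "nat \<Rightarrow> nat \<Rightarrow> 'a \<Rightarrow> real"
    and F :: "nat \<Rightarrow> real \<Rightarrow> real" and Mu :: "'u measure" and U :: "'a \<Rightarrow> 'u"
    and V :: "(real \<Rightarrow> real) set" and N :: "(real \<Rightarrow> real) \<Rightarrow> real" and a :: real
    and pol :: "nat \<Rightarrow> 'u \<Rightarrow> (nat \<Rightarrow> nat) \<Rightarrow> (nat \<Rightarrow> real) \<Rightarrow> nat"
    and T :: nat and x :: real
  assumes P: "prob_space M"
    and K: "K \<ge> 1"
    and Xmeas: "\<And>i s. i \<in> {1..K} \<Longrightarrow> s \<ge> 1 \<Longrightarrow> X i s \<in> borel_measurable M"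
    and Xdist: "\<And>i s y. i \<in> {1..K} \<Longrightarrow> s \<ge> 1 \<Longrightarrow> F i y = measure M {\<omega> \<in> space M. X i s \<omega> \<le> y}"
    and Xindep: "prob_space.indep_vars M (\<lambda>_. borel) (\<lambda>(i, s). X i s) ({1..K} \<times> {1..})"
    and Umeas: "U \<in> measurable M Mu"
    and Uindep: "prob_space.indep_set M (sets (vimage_algebra (space M) U Mu))
                   (sets (vimage_algebra (space M)
                      (\<lambda>\<omega>. restrict (\<lambda>(i, s). X i s \<omega>) ({1..K} \<times> {1..}))
                      (PiM ({1..K} \<times> {1..}) (\<lambda>_. borel))))"
    and norm: "fun_norm_on V N"
    and FV: "\<And>i. i \<in> {1..K} \<Longrightarrow> F i \<in> V"
    and empV: "\<And>i t \<omega>. i \<in> {1..K} \<Longrightarrow> t \<ge> 1 \<Longrightarrow> \<omega> \<in> space M \<Longrightarrow> emp_cdf X i t \<omega> \<in> V"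
    and devmeas: "\<And>i t. i \<in> {1..K} \<Longrightarrow> t \<ge> 1 \<Longrightarrow>
                    (\<lambda>\<omega>. N (\<lambda>y. emp_cdf X i t \<omega> y - F i y)) \<in> borel_measurable M"
    and a: "a > 0"
    and conc: "\<And>i x t. i \<in> {1..K} \<Longrightarrow> x > 0 \<Longrightarrow> t \<ge> 1 \<Longrightarrow>
                 measure M {\<omega> \<in> space M. N (\<lambda>y. emp_cdf X i t \<omega> y - F i y) \<ge> x}
                   \<le> 2 * exp (- a * real t * x\<^sup>2)"
    and adm: "admissible_policy K Mu pol"
    and T: "T \<ge> 1"
    and x: "x \<ge> 0"
  shows "measure M {\<omega> \<in> space M.
            N (\<lambda>y. pol_emp_cdf pol X U T \<omega> y - pol_mix_cdf K F pol X U T \<omega> y) > x}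
         \<le> 2 * real K * real T * exp (- a * (real T * x\<^sup>2) / (real K)\<^sup>2)"
proof -
  interpret prob_space M by (rule P)
  let ?ev = "{\<omega> \<in> space M.
            N (\<lambda>y. pol_emp_cdf pol X U T \<omega> y - pol_mix_cdf K F pol X U T \<omega> y) > x}"
  let ?B = "2 * exp (- a * (real T * x\<^sup>2) / (real K)\<^sup>2)"
  have Kpos: "real K > 0" "real T > 0" using K T by auto
  have nz: "(\<lambda>_. 0) \<in> V" and nadd: "\<forall>f\<in>V. \<forall>g\<in>V. (\<lambda>y. f y + g y) \<in> V"
    and nsc: "\<forall>c. \<forall>f\<in>V. (\<lambda>y. c * f y) \<in> V" and nN: "\<forall>c. \<forall>f\<in>V. N (\<lambda>y. c * f y) = \<bar>c\<bar> * N f"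
    using norm unfolding fun_norm_on_def by simp_all
  have admv: "\<forall>t\<ge>1. \<forall>u as xs. pol t u as xs \<in> {1..K}"
    using adm unfolding admissible_policy_def by (rule conjunct1)
  show ?thesis
  proof (cases "x = 0")
    case True
    have "measure M ?ev \<le> 1" by simp
    also have "1 \<le> 2 * real K * real T"
    proof -
      have "1 * 1 \<le> real K * real T" using K T by (intro mult_mono) auto
      then show ?thesis by simp
    qed
    finally show ?thesis using True by simp
  next
    case False
    then have xpos: "x > 0" using x by simp
    define \<tau> where "\<tau> i \<omega> = pol_count pol X U i T \<omega>" for i \<omega>
    define D where "D i t \<omega> = (\<lambda>y. emp_cdf X i t \<omega> y - F i y)" for i t \<omega>
    define E where "E p = {\<omega>\<in>space M. real T * x / (real K * real (snd p)) \<le> N (D (fst p) (snd p) \<omega>)}" for p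
    have act: "\<And>t \<omega>. t \<ge> 1 \<Longrightarrow> pol_action pol X U t \<omega> \<in> {1..K}"
    proof -
      fix t \<omega> assume "(t::nat) \<ge> 1"
      then obtain t' where t': "t = Suc t'" by (cases t) auto
      show "pol_action pol X U t \<omega> \<in> {1..K}"
        unfolding t' action_Suc using admv by simp
    qed
    have DV: "\<And>i t \<omega>. i \<in> {1..K} \<Longrightarrow> \<omega> \<in> space M \<Longrightarrow> D i t \<omega> \<in> V"
    proof -
      fix i t \<omega> assume i: "i \<in> {1..K}" and w: "\<omega> \<in> space M"
      have eV: "emp_cdf X i t \<omega> \<in> V"
      proof (cases "t = 0")
        case True
        then have "emp_cdf X i t \<omega> = (\<lambda>_. 0)" by (auto simp: emp_cdf_def)
        then show ?thesis using nz by simp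
      next
        case False then show ?thesis using empV i w by simp
      qed
      have m1: "(\<lambda>y. (-1) * F i y) \<in> V" using nsc FV[OF i] by blast
      have "(\<lambda>y. emp_cdf X i t \<omega> y + (-1) * F i y) \<in> V" using nadd[rule_format, OF eV m1] by simp
      then show "D i t \<omega> \<in> V" by (simp add: D_def)
    qed
    have sub: "?ev \<subseteq> (\<Union>p\<in>{1..K}\<times>{1..T}. E p)"
    proof
      fix \<omega> assume "\<omega> \<in> ?ev"
      then have w: "\<omega> \<in> space M" and big: "N (\<lambda>y. pol_emp_cdf pol X U T \<omega> y - pol_mix_cdf K F pol X U T \<omega> y) > x"
        by auto
      let ?A = "\<lambda>s. pol_action pol X U s \<omega>"
      have eq: "(\<lambda>y. pol_emp_cdf pol X U T \<omega> y - pol_mix_cdf K F pol X U T \<omega> y) =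
                (\<lambda>y. \<Sum>i\<in>{1..K}. (real (\<tau> i \<omega>) / real T) * D i (\<tau> i \<omega>) \<omega> y)"
      proof
        fix y
        define g where "g i s = (if X i s \<omega> \<le> y then 1 else 0 :: real)" for i s
        have r: "(\<Sum>t = 1..T. if pol_reward pol X U t \<omega> \<le> y then 1 else 0 :: real) =
                 (\<Sum>t = 1..T. g (?A t) (card {s \<in> {1..t}. ?A s = ?A t}))"
        proof (rule sum.cong)
          fix t assume "t \<in> {1..T}"
          then obtain t' where t': "t = Suc t'" by (cases t) auto
          show "(if pol_reward pol X U t \<omega> \<le> y then 1 else 0) = g (?A t) (card {s \<in> {1..t}. ?A s = ?A t})"
            unfolding t' reward_Suc g_def by simp
        qed simp
        also have "\<dots> = (\<Sum>i=1..K. \<Sum>s=1..\<tau> i \<omega>. g i s)"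
          unfolding \<tau>_def pol_count_def by (rule regroup) (rule act)
        also have "\<dots> = (\<Sum>i=1..K. real (\<tau> i \<omega>) * emp_cdf X i (\<tau> i \<omega>) \<omega> y)"
          by (rule sum.cong) (auto simp: emp_cdf_def g_def)
        finally have r2: "pol_emp_cdf pol X U T \<omega> y = (1 / real T) * (\<Sum>i=1..K. real (\<tau> i \<omega>) * emp_cdf X i (\<tau> i \<omega>) \<omega> y)"
          by (simp add: pol_emp_cdf_def)
        show "pol_emp_cdf pol X U T \<omega> y - pol_mix_cdf K F pol X U T \<omega> y =
              (\<Sum>i\<in>{1..K}. (real (\<tau> i \<omega>) / real T) * D i (\<tau> i \<omega>) \<omega> y)"
          unfolding r2 pol_mix_cdf_def D_def \<tau>_def
          by (simp add: sum_distrib_left right_diff_distrib sum_subtractf[symmetric] algebra_simps)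
      qed
      have "N (\<lambda>y. \<Sum>i\<in>{1..K}. (real (\<tau> i \<omega>) / real T) * D i (\<tau> i \<omega>) \<omega> y)
            \<le> (\<Sum>i\<in>{1..K}. N (\<lambda>y. (real (\<tau> i \<omega>) / real T) * D i (\<tau> i \<omega>) \<omega> y))"
      proof -
        have "\<forall>i\<in>{1..K}. (\<lambda>y. (real (\<tau> i \<omega>) / real T) * D i (\<tau> i \<omega>) \<omega> y) \<in> V"
          using nsc DV[OF _ w] by blast
        from norm_sum[OF norm _ this] show ?thesis by simp
      qed
      also have "\<dots> = (\<Sum>i\<in>{1..K}. (real (\<tau> i \<omega>) / real T) * N (D i (\<tau> i \<omega>) \<omega>))"
      proof (rule sum.cong[OF refl])
        fix i assume "i \<in> {1..K}"
        then have "N (\<lambda>y. (real (\<tau> i \<omega>) / real T) * D i (\<tau> i \<omega>) \<omega> y) = \<bar>real (\<tau> i \<omega>) / real T\<bar> * N (D i (\<tau> i \<omega>) \<omega>)"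
          using nN DV[OF _ w] by blast
        then show "N (\<lambda>y. (real (\<tau> i \<omega>) / real T) * D i (\<tau> i \<omega>) \<omega> y) = (real (\<tau> i \<omega>) / real T) * N (D i (\<tau> i \<omega>) \<omega>)"
          by simp
      qed
      finally have le: "x < (\<Sum>i\<in>{1..K}. (real (\<tau> i \<omega>) / real T) * N (D i (\<tau> i \<omega>) \<omega>))"
        using big eq by simp
      obtain i where i: "i \<in> {1..K}" and gi: "(real (\<tau> i \<omega>) / real T) * N (D i (\<tau> i \<omega>) \<omega>) > x / real K"
      proof (rule ccontr)
        assume "\<not> thesis"
        then have "\<forall>i\<in>{1..K}. (real (\<tau> i \<omega>) / real T) * N (D i (\<tau> i \<omega>) \<omega>) \<le> x / real K"
          using that by force
        then have "(\<Sum>i\<in>{1..K}. (real (\<tau> i \<omega>) / real T) * N (D i (\<tau> i \<omega>) \<omega>)) \<le> real (card {1..K}) * (x / real K)"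
          by (intro sum_bounded_above) auto
        also have "\<dots> = x" using Kpos by simp
        finally show False using le by simp
      qed
      have tne: "\<tau> i \<omega> \<noteq> 0"
      proof
        assume "\<tau> i \<omega> = 0"
        then show False using gi divide_pos_pos[OF xpos Kpos(1)] by simp
      qed
      have tle: "\<tau> i \<omega> \<le> T" unfolding \<tau>_def pol_count_def
        by (rule order_trans[OF card_mono[of "{1..T}"]]) auto
      have tp: "real (\<tau> i \<omega>) > 0" using tne by simp
      have "real T * x / (real K * real (\<tau> i \<omega>)) \<le> N (D i (\<tau> i \<omega>) \<omega>)"
        using gi tp Kpos by (simp add: field_simps)
      then have "\<omega> \<in> E (i, \<tau> i \<omega>)" using w by (simp add: E_def)
      moreover have "(i, \<tau> i \<omega>) \<in> {1..K}\<times>{1..T}" using i tne tle by auto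
      ultimately show "\<omega> \<in> (\<Union>p\<in>{1..K}\<times>{1..T}. E p)" by blast
    qed
    have Emeas: "\<And>p. p \<in> {1..K}\<times>{1..T} \<Longrightarrow> E p \<in> events"
    proof -
      fix p assume "p \<in> {1..K}\<times>{1..T}"
      then have m: "(\<lambda>\<omega>. N (D (fst p) (snd p) \<omega>)) \<in> borel_measurable M"
        using devmeas unfolding D_def by auto
      have "E p = (\<lambda>\<omega>. N (D (fst p) (snd p) \<omega>)) -` {real T * x / (real K * real (snd p))..} \<inter> space M"
        unfolding E_def by auto
      then show "E p \<in> events" using measurable_sets[OF m, of "{real T * x / (real K * real (snd p))..}"] by simp
    qed
    have Ebound: "\<And>p. p \<in> {1..K}\<times>{1..T} \<Longrightarrow> prob (E p) \<le> ?B"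
    proof -
      fix p assume p: "p \<in> {1..K}\<times>{1..T}"
      obtain i t where pe: "p = (i, t)" by (cases p)
      have i: "i \<in> {1..K}" and t: "t \<ge> 1" "t \<le> T" using p pe by auto
      have tp: "real t > 0" using t by simp
      define c where "c = real T * x / (real K * real t)"
      have cp: "c > 0" using xpos Kpos tp by (simp add: c_def)
      have "prob (E p) \<le> 2 * exp (- a * real t * c\<^sup>2)"
        using conc[OF i cp t(1)] by (simp add: E_def pe c_def D_def)
      also have "\<dots> \<le> ?B"
      proof -
        have "real t * c\<^sup>2 = (real T * x / real K)\<^sup>2 / real t"
          using tp Kpos by (simp add: c_def power2_eq_square field_simps)
        also have "\<dots> \<ge> (real T * x / real K)\<^sup>2 / real T"
          using tp t by (intro divide_left_mono) auto
        finally have h: "real t * c\<^sup>2 \<ge> real T * x\<^sup>2 / (real K)\<^sup>2"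
          using Kpos by (simp add: power2_eq_square field_simps)
        have "- a * real t * c\<^sup>2 \<le> - a * (real T * x\<^sup>2) / (real K)\<^sup>2"
        proof -
          have "a * (real T * x\<^sup>2 / (real K)\<^sup>2) \<le> a * (real t * c\<^sup>2)"
            using mult_left_mono[OF h] a by simp
          moreover have "- a * real t * c\<^sup>2 = - (a * (real t * c\<^sup>2))" by simp
          moreover have "- a * (real T * x\<^sup>2) / (real K)\<^sup>2 = - (a * (real T * x\<^sup>2 / (real K)\<^sup>2))" by simp
          ultimately show ?thesis by linarith
        qed
        then show ?thesis by simp
      qed
      finally show "prob (E p) \<le> ?B" .
    qed
    have "measure M ?ev \<le> prob (\<Union>p\<in>{1..K}\<times>{1..T}. E p)"
      using sub Emeas by (intro finite_measure_mono) auto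
    also have "\<dots> \<le> (\<Sum>p\<in>{1..K}\<times>{1..T}. prob (E p))"
      using Emeas by (intro finite_measure_subadditive_finite) auto
    also have "\<dots> \<le> real (card ({1..K}\<times>{1..T})) * ?B"
      using Ebound by (intro sum_bounded_above) auto
    also have "\<dots> = 2 * real K * real T * exp (- a * (real T * x\<^sup>2) / (real K)\<^sup>2)"
      by (simp add: card_cartesian_product)
    finally show ?thesis .
  qed
qed

end
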